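(* Let $X$ be a real-valued random variable and let $f,g:\mathbb{R}\to\mathbb{R}^+$ be bounded increasing functions. Then $$\operatorname{Cov}[f(X)g(X),\,g(X)]\;\geq\;\mathbb{E}[f(X)]\,\operatorname{Var}[g(X)].$$ *)

theory Defs
  imports "HOL-Probability.Probability"
begin

definition covariance :: "'a measure \<Rightarrow> ('a \<Rightarrow> real) \<Rightarrow> ('a \<Rightarrow> real) \<Rightarrow> real" where
  "covariance M U V =
     (\<integral>x. (U x - (\<integral>y. U y \<partial>M)) * (V x - (\<integral>y. V y \<partial>M)) \<partial>M)"

end

theory Submission
  imports Defs
begin

lemma crossing:
  fixes f p :: "real \<Rightarrow> real"
  assumes mf: "mono f" and bf: "bounded (range f)" and fpos: "\<And>t. f t > 0"
    and P: "\<And>t t'. p t' < 0 \<Longrightarrow> t \<le> t' \<Longrightarrow> p t \<le> 0"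
  shows "\<exists>a. \<forall>t. (f t - a) * p t \<ge> 0"
proof (cases "\<exists>t. p t < 0")
  case False
  then have "\<forall>t. (f t - 0) * p t \<ge> 0" using fpos
    by (metis diff_zero less_eq_real_def mult_nonneg_nonneg not_less)
  then show ?thesis by blast
next
  case True
  define N where "N = {t. p t < 0}"
  define a where "a = Sup (f ` N)"
  have ne: "f ` N \<noteq> {}" using True N_def by auto
  have bdd: "bdd_above (f ` N)"
    using bf by (meson bdd_above_mono bounded_imp_bdd_above image_subsetI rangeI)
  have "(f t - a) * p t \<ge> 0" for t
  proof (cases "p t < 0")
    case True
    then have "f t \<le> a" unfolding a_def using bdd by (intro cSup_upper) (auto simp: N_def)
    then show ?thesis using True by (simp add: mult_nonpos_nonpos)
  next
    case F: False
    show ?thesis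
    proof (cases "p t = 0")
      case True then show ?thesis by simp
    next
      case False
      then have pt: "p t > 0" using F by simp
      have "\<forall>t'\<in>N. f t' \<le> f t"
      proof
        fix t' assume "t' \<in> N"
        then have "p t' < 0" by (simp add: N_def)
        then have "t' \<le> t" using P[of t' t] pt
          by (metis P linorder_le_cases not_le)
        then show "f t' \<le> f t" using mf by (simp add: mono_def)
      qed
      then have "a \<le> f t" unfolding a_def using ne by (intro cSup_least) auto
      then show ?thesis using pt by simp
    qed
  qed
  then show ?thesis by blast
qed

theorem lemma4p14:
  fixes M :: "'a measure" and X :: "'a \<Rightarrow> real" and f g :: "real \<Rightarrow> real"
  assumes "prob_space M"
    and "X \<in> borel_measurable M"
    and "\<And>t. f t > 0" and "\<And>t. g t > 0"
    and "bounded (range f)" and "bounded (range g)"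
    and "mono f" and "mono g"
  shows "covariance M (\<lambda>x. f (X x) * g (X x)) (\<lambda>x. g (X x))
           \<ge> prob_space.expectation M (\<lambda>x. f (X x)) * prob_space.variance M (\<lambda>x. g (X x))"
proof -
  interpret prob_space M by fact
  obtain Bf where Bf: "\<And>t. \<bar>f t\<bar> \<le> Bf" using assms(5)
    by (metis bounded_iff rangeI real_norm_def)
  obtain Bg where Bg: "\<And>t. \<bar>g t\<bar> \<le> Bg" using assms(6)
    by (metis bounded_iff rangeI real_norm_def)
  have mf: "(\<lambda>x. f (X x)) \<in> borel_measurable M"
    using borel_measurable_mono[OF assms(7)] assms(2) measurable_compose by blast
  have mg: "(\<lambda>x. g (X x)) \<in> borel_measurable M"
    using borel_measurable_mono[OF assms(8)] assms(2) measurable_compose by blast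
  define \<mu> where "\<mu> = expectation (\<lambda>x. g (X x))"
  define c where "c = variance (\<lambda>x. g (X x))"
  have c0: "c \<ge> 0" unfolding c_def by (rule variance_positive)
  define p where "p t = g t * (g t - \<mu>) - c" for t
  have P: "p t \<le> 0" if "p t' < 0" "t \<le> t'" for t t'
  proof -
    have le: "g t \<le> g t'" using assms(8) that(2) by (simp add: mono_def)
    have "g t * (g t - \<mu>) \<le> c"
    proof (cases "g t \<le> \<mu>")
      case True
      then have "g t * (g t - \<mu>) \<le> 0" using assms(4)[of t] by (intro mult_nonneg_nonpos) auto
      then show ?thesis using c0 by linarith
    next
      case False
      then have "g t * (g t - \<mu>) \<le> g t' * (g t' - \<mu>)"
        using le assms(4)[of t] by (intro mult_mono) auto
      then show ?thesis using that(1) by (simp add: p_def)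
    qed
    then show ?thesis by (simp add: p_def)
  qed
  obtain a where a: "\<And>t. (f t - a) * p t \<ge> 0"
    using crossing[OF assms(7) assms(5) assms(3), of p] P by blast
  define F where "F x = f (X x)" for x
  define G where "G x = g (X x)" for x
  have bF: "\<bar>F x\<bar> \<le> Bf" for x using Bf F_def by auto
  have bG: "\<bar>G x\<bar> \<le> Bg" for x using Bg G_def by auto
  have mF: "F \<in> borel_measurable M" using mf by (simp add: F_def[abs_def])
  have mG: "G \<in> borel_measurable M" using mg by (simp add: G_def[abs_def])
  have int: "integrable M H" if "H \<in> borel_measurable M" "\<And>x. \<bar>H x\<bar> \<le> B" for H :: "'a \<Rightarrow> real" and B :: real
    using that by (intro integrable_const_bound[where B=B]) auto
  have FF: "(\<lambda>x. f (X x)) = F" by (simp add: F_def fun_eq_iff)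
  have GG: "(\<lambda>x. g (X x)) = G" by (simp add: G_def fun_eq_iff)
  have \<mu>G: "\<mu> = expectation G" using GG \<mu>_def by simp
  have Bf0: "0 \<le> Bf" using bF[of undefined] by linarith
  have Bg0: "0 \<le> Bg" using bG[of undefined] by linarith
  have b1: "\<bar>G x - \<mu>\<bar> \<le> Bg + \<bar>\<mu>\<bar>" for x using bG[of x] by linarith
  have iF: "integrable M F" using int[OF mF bF] .
  have iG: "integrable M G" using int[OF mG bG] .
  have iGm: "integrable M (\<lambda>x. G x - \<mu>)" using iG by simp
  have iGG: "integrable M (\<lambda>x. G x * (G x - \<mu>))"
    by (rule int[of _ "Bg * (Bg + \<bar>\<mu>\<bar>)"]) (use mG bG b1 Bf0 Bg0 in \<open>auto simp: abs_mult intro!: mult_mono\<close>)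
  have iFG: "integrable M (\<lambda>x. F x * G x)"
    by (rule int[of _ "Bf * Bg"]) (use mG mF bG bF Bf0 Bg0 in \<open>auto simp: abs_mult intro!: mult_mono\<close>)
  have iFGG: "integrable M (\<lambda>x. F x * (G x * (G x - \<mu>)))"
    by (rule int[of _ "Bf * (Bg * (Bg + \<bar>\<mu>\<bar>))"]) (use mG mF bG bF b1 Bf0 Bg0 in \<open>auto simp: abs_mult intro!: mult_mono\<close>)
  have e0: "expectation (\<lambda>x. G x - \<mu>) = 0"
    using iG by (simp add: \<mu>G prob_space)
  have cov: "covariance M (\<lambda>x. f (X x) * g (X x)) (\<lambda>x. g (X x)) = expectation (\<lambda>x. F x * (G x * (G x - \<mu>)))"
  proof -
    have "covariance M (\<lambda>x. f (X x) * g (X x)) (\<lambda>x. g (X x))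
        = expectation (\<lambda>x. F x * G x * (G x - \<mu>) - expectation (\<lambda>x. F x * G x) * (G x - \<mu>))"
      unfolding covariance_def by (simp add: F_def G_def \<mu>_def algebra_simps)
    also have "\<dots> = expectation (\<lambda>x. F x * (G x * (G x - \<mu>))) - expectation (\<lambda>x. F x * G x) * expectation (\<lambda>x. G x - \<mu>)"
      using iFGG iGm by (simp add: mult.assoc)
    finally show ?thesis using e0 by simp
  qed
  have cc: "c = expectation (\<lambda>x. G x * (G x - \<mu>))"
  proof -
    have "c = expectation (\<lambda>x. G x * (G x - \<mu>) - \<mu> * (G x - \<mu>))"
      unfolding c_def by (simp add: G_def \<mu>_def power2_eq_square algebra_simps)
    also have "\<dots> = expectation (\<lambda>x. G x * (G x - \<mu>))"
      using iGG iGm e0 by simp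
    finally show ?thesis .
  qed
  have iP: "integrable M (\<lambda>x. p (X x))"
    using iGG by (simp add: p_def G_def)
  have ep: "expectation (\<lambda>x. p (X x)) = 0"
    using iGG cc by (simp add: p_def G_def prob_space)
  have "0 \<le> expectation (\<lambda>x. (F x - a) * p (X x))"
    using a by (simp add: F_def)
  also have "\<dots> = expectation (\<lambda>x. F x * (G x * (G x - \<mu>)) - c * F x - a * p (X x))"
    by (rule arg_cong[where f="integral\<^sup>L M"]) (simp add: fun_eq_iff p_def G_def algebra_simps)
  also have "\<dots> = expectation (\<lambda>x. F x * (G x * (G x - \<mu>))) - c * expectation F - a * expectation (\<lambda>x. p (X x))"
    using iFGG iF iP by simp
  finally have "c * expectation F \<le> expectation (\<lambda>x. F x * (G x * (G x - \<mu>)))" using ep by simp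
  then show ?thesis using cov by (simp add: FF c_def mult.commute)
qed

end
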